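(* Consider the DC network $$-L_\alpha\dot I_\alpha=V_\alpha-u_\alpha\circ V_{s\alpha},\quad -L_\beta\dot I_\beta=(\mathbf 1_{n_\beta}-u_\beta)\circ V_\beta-V_{s\beta},\quad -L_l\dot I_l=D^\top V+R_lI_l,$$ $$C_\alpha\dot V_\alpha=I_\alpha-G_\alpha V_\alpha+D_\alpha I_l,\quad C_\beta\dot V_\beta=(\mathbf 1_{n_\beta}-u_\beta)\circ I_\beta-G_\beta V_\beta+D_\beta I_l,$$ extended by $\dot u=\upsilon$ where $u=(u_\alpha^\top,u_\beta^\top)^\top$. Let $I=(I_\alpha^\top,I_\beta^\top,I_l^\top)^\top$, $V=(V_\alpha^\top,V_\beta^\top)^\top$, $L=\mathrm{diag}(L_\alpha,L_\beta,L_l)$, $C=\mathrm{diag}(C_\alpha,C_\beta)$. Then the system is passive with respect to the storage function $S=\tfrac12\dot I^\top L\dot I+\tfrac12\dot V^\top C\dot V$ and the port-variables $\dot u$ and $$y_{\mathrm{DC}}=\begin{bmatrix}\dot I_\alpha\circ V_{s\alpha}\\ \dot I_\beta\circ V_\beta-\dot V_\beta\circ I_\beta\end{bmatrix},$$ i.e. $\dot S\le\dot u^\top y_{\mathrm{DC}}$.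
   Context: The network is a connected undirected graph with $n_\alpha$ buck-converter nodes, $n_\beta$ boost-converter nodes ($n=n_\alpha+n_\beta$) and $m$ lines; $D\in\mathbb{R}^{n\times m}$ is the incidence matrix (entry $+1$/$-1$ if node $i$ is the positive/negative end of line $k$, else $0$), and $D_\alpha\in\mathbb{R}^{n_\alpha\times m}$, $D_\beta\in\mathbb{R}^{n_\beta\times m}$ are its rows for buck and boost nodes. $I_\alpha,V_\alpha,V_{s\alpha},u_\alpha\in\mathbb{R}^{n_\alpha}$; $I_\beta,V_\beta,V_{s\beta},u_\beta\in\mathbb{R}^{n_\beta}$; $I_l\in\mathbb{R}^m$ line currents; $V_{s\alpha},V_{s\beta}$ constant sources; $L_\alpha,L_\beta,L_l,C_\alpha,C_\beta,R_l,G_\alpha,G_\beta$ are positive definite diagonal matrices. $\circ$ is the entrywise (Hadamard) product, $\mathbf 1_{n_\beta}$ the all-ones vector, $u\in[0,1]^n$ duty cycles. *)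

theory Defs
  imports "HOL-Analysis.Analysis"
begin

definition hmul :: "real ^ 'n \<Rightarrow> real ^ 'n \<Rightarrow> real ^ 'n" (infixl "\<circ>\<^sub>H" 70) where
  "x \<circ>\<^sub>H y = (\<chi> i. x $ i * y $ i)"

definition pd_diag :: "real ^ 'n ^ 'n \<Rightarrow> bool" where
  "pd_diag A \<longleftrightarrow> (\<forall>i j. i \<noteq> j \<longrightarrow> A $ i $ j = 0) \<and> (\<forall>i. A $ i $ i > 0)"

text \<open>Full incidence matrix assembled from the buck rows and the boost rows;
  nodes are indexed by the sum type (Inl = buck node, Inr = boost node).\<close>
definition inc_full :: "real ^ 'l ^ 'a \<Rightarrow> real ^ 'l ^ 'b \<Rightarrow> ('a + 'b) \<Rightarrow> 'l \<Rightarrow> real" where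
  "inc_full Da Db p k = (case p of Inl i \<Rightarrow> Da $ i $ k | Inr j \<Rightarrow> Db $ j $ k)"

definition is_incidence :: "real ^ 'l ^ 'a \<Rightarrow> real ^ 'l ^ 'b \<Rightarrow> bool" where
  "is_incidence Da Db \<longleftrightarrow>
     (\<forall>k. \<exists>p q. p \<noteq> q \<and> inc_full Da Db p k = 1 \<and> inc_full Da Db q k = -1 \<and>
            (\<forall>r. r \<noteq> p \<and> r \<noteq> q \<longrightarrow> inc_full Da Db r k = 0))"

definition inc_connected :: "real ^ 'l ^ 'a \<Rightarrow> real ^ 'l ^ 'b \<Rightarrow> bool" where
  "inc_connected Da Db \<longleftrightarrow>
     (\<forall>p q. (\<lambda>x y. \<exists>k. inc_full Da Db x k \<noteq> 0 \<and> inc_full Da Db y k \<noteq> 0)\<^sup>*\<^sup>* p q)"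

end

theory Submission
  imports Defs
begin

lemma hmul_bb: "bounded_bilinear (hmul :: real^'n \<Rightarrow> _)"
proof -
  have "bilinear (hmul :: real^'n \<Rightarrow> _)"
    unfolding bilinear_def linear_iff hmul_def
    by (auto simp: vec_eq_iff algebra_simps)
  thus ?thesis using bilinear_conv_bounded_bilinear by blast
qed

lemma hmul_deriv:
  assumes "(f has_vector_derivative f') (at x)" "(g has_vector_derivative g') (at x)"
  shows "((\<lambda>x. f x \<circ>\<^sub>H g x) has_vector_derivative (f x \<circ>\<^sub>H g' + f' \<circ>\<^sub>H g x)) (at x)"
  by (rule bounded_bilinear.has_vector_derivative[OF hmul_bb assms])

lemma mv_deriv:
  assumes "(f has_vector_derivative f') (at x)"
  shows "((\<lambda>x. (A::real^'n^'m) *v f x) has_vector_derivative (A *v f')) (at x)"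
  by (rule bounded_linear.has_vector_derivative[OF matrix_vector_mul_bounded_linear assms])

lemma quad_deriv:
  assumes "(f has_vector_derivative f') (at x)"
  shows "((\<lambda>x. f x \<bullet> ((A::real^'n^'n) *v f x)) has_real_derivative (f x \<bullet> (A *v f') + f' \<bullet> (A *v f x))) (at x)"
  unfolding has_real_derivative_iff_has_vector_derivative
  by (rule bounded_bilinear.has_vector_derivative[OF bounded_bilinear_inner assms mv_deriv[OF assms]])

lemma inner_mv_transpose: "(x::real^'n) \<bullet> ((A::real^'m^'n) *v y) = (transpose A *v x) \<bullet> y"
  by (metis dot_lmul_matrix inner_commute transpose_transpose vector_transpose_matrix)

lemma pd_sym: "pd_diag A \<Longrightarrow> transpose A = A"
  unfolding pd_diag_def transpose_def by (auto simp: vec_eq_iff) (metis)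

lemma pd_nonneg: assumes "pd_diag (A::real^'n^'n)" shows "0 \<le> x \<bullet> (A *v x)"
proof -
  have "x \<bullet> (A *v x) = (\<Sum>i\<in>UNIV. A$i$i * (x$i)^2)"
  proof -
    have "\<And>i j. A$i$j = (if j = i then A$i$i else 0)" using assms unfolding pd_diag_def by auto
    have "\<And>i. (\<Sum>j\<in>UNIV. A$i$j * x$j) = A$i$i * x$i"
    proof -
      fix i
      have "(\<Sum>j\<in>UNIV. A$i$j * x$j) = (\<Sum>j\<in>UNIV. if j = i then A$i$i * x$j else 0)"
        by (rule sum.cong, simp, subst \<open>\<And>i j. A$i$j = _\<close>, simp)
      thus "(\<Sum>j\<in>UNIV. A$i$j * x$j) = A$i$i * x$i" by simp
    qed
    thus ?thesis by (simp add: inner_vec_def matrix_vector_mult_def power2_eq_square mult_ac)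
  qed
  also have "\<dots> \<ge> 0" using assms unfolding pd_diag_def by (intro sum_nonneg) (simp add: less_imp_le)
  finally show ?thesis .
qed

lemma inner_hmul: "(x::real^'n) \<bullet> (y \<circ>\<^sub>H z) = y \<bullet> (x \<circ>\<^sub>H z)"
  unfolding inner_vec_def hmul_def by (simp add: mult.left_commute)
lemma hmul_comm: "(x::real^'n) \<circ>\<^sub>H y = y \<circ>\<^sub>H x"
  unfolding hmul_def by (simp add: mult.commute)
lemma hmul_minus_left: "((x::real^'n) - y) \<circ>\<^sub>H z = x \<circ>\<^sub>H z - y \<circ>\<^sub>H z"
  unfolding hmul_def by (simp add: vec_eq_iff algebra_simps)
lemma hmul_uminus_left: "(- (x::real^'n)) \<circ>\<^sub>H z = - (x \<circ>\<^sub>H z)"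
  unfolding hmul_def by (simp add: vec_eq_iff algebra_simps)
lemma hmul_zero_left: "(0::real^'n) \<circ>\<^sub>H z = 0"
  unfolding hmul_def by (simp add: vec_eq_iff)
lemma hmul_zero_right: "z \<circ>\<^sub>H (0::real^'n) = 0"
  unfolding hmul_def by (simp add: vec_eq_iff)

theorem lemma4:
  fixes Da :: "real ^ 'l ^ 'a" and Db :: "real ^ 'l ^ 'b"
    and La Ca Ga :: "real ^ 'a ^ 'a" and Lb Cb Gb :: "real ^ 'b ^ 'b"
    and Ll Rl :: "real ^ 'l ^ 'l"
    and Vsa :: "real ^ 'a" and Vsb :: "real ^ 'b"
    and Ia Va ua dIa dVa dua ddIa ddVa :: "real \<Rightarrow> real ^ 'a"
    and Ib Vb ub dIb dVb dub ddIb ddVb :: "real \<Rightarrow> real ^ 'b"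
    and Il dIl ddIl :: "real \<Rightarrow> real ^ 'l"
    and t :: real
  assumes inc: "is_incidence Da Db" and conn: "inc_connected Da Db"
    and pd: "pd_diag La" "pd_diag Lb" "pd_diag Ll" "pd_diag Ca" "pd_diag Cb"
            "pd_diag Rl" "pd_diag Ga" "pd_diag Gb"
    and duty: "\<And>s i. ua s $ i \<in> {0..1}" "\<And>s j. ub s $ j \<in> {0..1}"
    and dI: "\<And>s. (Ia has_vector_derivative dIa s) (at s)"
            "\<And>s. (Ib has_vector_derivative dIb s) (at s)"
            "\<And>s. (Il has_vector_derivative dIl s) (at s)"
    and ddI: "\<And>s. (dIa has_vector_derivative ddIa s) (at s)"
             "\<And>s. (dIb has_vector_derivative ddIb s) (at s)"
             "\<And>s. (dIl has_vector_derivative ddIl s) (at s)"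
    and dV: "\<And>s. (Va has_vector_derivative dVa s) (at s)"
            "\<And>s. (Vb has_vector_derivative dVb s) (at s)"
    and ddV: "\<And>s. (dVa has_vector_derivative ddVa s) (at s)"
             "\<And>s. (dVb has_vector_derivative ddVb s) (at s)"
    and du: "\<And>s. (ua has_vector_derivative dua s) (at s)"
            "\<And>s. (ub has_vector_derivative dub s) (at s)"
    and eq1: "\<And>s. - (La *v dIa s) = Va s - ua s \<circ>\<^sub>H Vsa"
    and eq2: "\<And>s. - (Lb *v dIb s) = (1 - ub s) \<circ>\<^sub>H Vb s - Vsb"
    and eq3: "\<And>s. - (Ll *v dIl s) = transpose Da *v Va s + transpose Db *v Vb s + Rl *v Il s"
    and eq4: "\<And>s. Ca *v dVa s = Ia s - Ga *v Va s + Da *v Il s"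
    and eq5: "\<And>s. Cb *v dVb s = (1 - ub s) \<circ>\<^sub>H Ib s - Gb *v Vb s + Db *v Il s"
  shows "\<exists>S'. ((\<lambda>s. (1/2) * (dIa s \<bullet> (La *v dIa s) + dIb s \<bullet> (Lb *v dIb s) + dIl s \<bullet> (Ll *v dIl s))
                 + (1/2) * (dVa s \<bullet> (Ca *v dVa s) + dVb s \<bullet> (Cb *v dVb s)))
              has_real_derivative S') (at t)
          \<and> S' \<le> dua t \<bullet> (dIa t \<circ>\<^sub>H Vsa) + dub t \<bullet> (dIb t \<circ>\<^sub>H Vb t - dVb t \<circ>\<^sub>H Ib t)"
proof -
  note sym = pd_sym[OF pd(1)] pd_sym[OF pd(2)] pd_sym[OF pd(3)] pd_sym[OF pd(4)] pd_sym[OF pd(5)]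
  have symq: "\<And>(A::real^'n^'n) x y. transpose A = A \<Longrightarrow> y \<bullet> (A *v x) = x \<bullet> (A *v y)"
    by (metis inner_mv_transpose inner_commute)
  define S0 where "S0 = (1/2) * ((dIa t \<bullet> (La *v ddIa t) + ddIa t \<bullet> (La *v dIa t))
      + (dIb t \<bullet> (Lb *v ddIb t) + ddIb t \<bullet> (Lb *v dIb t))
      + (dIl t \<bullet> (Ll *v ddIl t) + ddIl t \<bullet> (Ll *v dIl t)))
      + (1/2) * ((dVa t \<bullet> (Ca *v ddVa t) + ddVa t \<bullet> (Ca *v dVa t))
      + (dVb t \<bullet> (Cb *v ddVb t) + ddVb t \<bullet> (Cb *v dVb t)))"
  have D: "((\<lambda>s. (1/2) * (dIa s \<bullet> (La *v dIa s) + dIb s \<bullet> (Lb *v dIb s) + dIl s \<bullet> (Ll *v dIl s))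
                 + (1/2) * (dVa s \<bullet> (Ca *v dVa s) + dVb s \<bullet> (Cb *v dVb s)))
              has_real_derivative S0) (at t)"
    unfolding S0_def
    by (intro DERIV_add DERIV_cmult quad_deriv ddI ddV)
  have e1: "- (La *v ddIa t) = dVa t - (ua t \<circ>\<^sub>H 0 + dua t \<circ>\<^sub>H Vsa)"
  proof (rule vector_derivative_unique_at)
    show "((\<lambda>s. - (La *v dIa s)) has_vector_derivative - (La *v ddIa t)) (at t)"
      by (intro has_vector_derivative_minus mv_deriv ddI)
    show "((\<lambda>s. - (La *v dIa s)) has_vector_derivative dVa t - (ua t \<circ>\<^sub>H 0 + dua t \<circ>\<^sub>H Vsa)) (at t)"
      unfolding eq1 by (intro has_vector_derivative_diff dV hmul_deriv du has_vector_derivative_const)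
  qed
  have e2: "- (Lb *v ddIb t) = ((1 - ub t) \<circ>\<^sub>H dVb t + (0 - dub t) \<circ>\<^sub>H Vb t) - 0"
  proof (rule vector_derivative_unique_at)
    show "((\<lambda>s. - (Lb *v dIb s)) has_vector_derivative - (Lb *v ddIb t)) (at t)"
      by (intro has_vector_derivative_minus mv_deriv ddI)
    show "((\<lambda>s. - (Lb *v dIb s)) has_vector_derivative ((1 - ub t) \<circ>\<^sub>H dVb t + (0 - dub t) \<circ>\<^sub>H Vb t) - 0) (at t)"
      unfolding eq2 by (intro has_vector_derivative_diff dV hmul_deriv du has_vector_derivative_const)
  qed
  have e3: "- (Ll *v ddIl t) = transpose Da *v dVa t + transpose Db *v dVb t + Rl *v dIl t"
  proof (rule vector_derivative_unique_at)
    show "((\<lambda>s. - (Ll *v dIl s)) has_vector_derivative - (Ll *v ddIl t)) (at t)"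
      by (intro has_vector_derivative_minus mv_deriv ddI)
    show "((\<lambda>s. - (Ll *v dIl s)) has_vector_derivative transpose Da *v dVa t + transpose Db *v dVb t + Rl *v dIl t) (at t)"
      unfolding eq3 by (intro has_vector_derivative_add mv_deriv dV dI)
  qed
  have e4: "Ca *v ddVa t = dIa t - Ga *v dVa t + Da *v dIl t"
  proof (rule vector_derivative_unique_at)
    show "((\<lambda>s. Ca *v dVa s) has_vector_derivative Ca *v ddVa t) (at t)"
      by (intro mv_deriv ddV)
    show "((\<lambda>s. Ca *v dVa s) has_vector_derivative dIa t - Ga *v dVa t + Da *v dIl t) (at t)"
      unfolding eq4 by (intro has_vector_derivative_add has_vector_derivative_diff mv_deriv dV dI)
  qed
  have e5: "Cb *v ddVb t = ((1 - ub t) \<circ>\<^sub>H dIb t + (0 - dub t) \<circ>\<^sub>H Ib t) - Gb *v dVb t + Db *v dIl t"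
  proof (rule vector_derivative_unique_at)
    show "((\<lambda>s. Cb *v dVb s) has_vector_derivative Cb *v ddVb t) (at t)"
      by (intro mv_deriv ddV)
    show "((\<lambda>s. Cb *v dVb s) has_vector_derivative ((1 - ub t) \<circ>\<^sub>H dIb t + (0 - dub t) \<circ>\<^sub>H Ib t) - Gb *v dVb t + Db *v dIl t) (at t)"
      unfolding eq5 by (intro has_vector_derivative_add has_vector_derivative_diff mv_deriv dV dI
          hmul_deriv du has_vector_derivative_const)
  qed
  have S0': "S0 = dIa t \<bullet> (La *v ddIa t) + dIb t \<bullet> (Lb *v ddIb t) + dIl t \<bullet> (Ll *v ddIl t)
     + dVa t \<bullet> (Ca *v ddVa t) + dVb t \<bullet> (Cb *v ddVb t)"
    unfolding S0_def symq[OF sym(1), of "ddIa t" "dIa t"] symq[OF sym(2), of "ddIb t" "dIb t"]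
      symq[OF sym(3), of "ddIl t" "dIl t"] symq[OF sym(4), of "ddVa t" "dVa t"] symq[OF sym(5), of "ddVb t" "dVb t"]
    by (simp add: algebra_simps)
  have T1: "dIa t \<bullet> (La *v ddIa t) = - (dIa t \<bullet> dVa t) + dua t \<bullet> (dIa t \<circ>\<^sub>H Vsa)"
  proof -
    have "La *v ddIa t = dua t \<circ>\<^sub>H Vsa - dVa t" using e1 hmul_zero_right
      by (metis add_0 minus_diff_eq minus_minus)
    thus ?thesis by (simp add: inner_diff_right inner_hmul)
  qed
  have T2: "dIb t \<bullet> (Lb *v ddIb t) = - (dIb t \<bullet> ((1 - ub t) \<circ>\<^sub>H dVb t)) + dub t \<bullet> (dIb t \<circ>\<^sub>H Vb t)"
  proof -
    have a: "Lb *v ddIb t = - ((1 - ub t) \<circ>\<^sub>H dVb t + (0 - dub t) \<circ>\<^sub>H Vb t)"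
      using e2 by (metis diff_zero minus_minus)
    have b: "(0 - dub t) \<circ>\<^sub>H Vb t = - (dub t \<circ>\<^sub>H Vb t)" by (simp add: hmul_uminus_left)
    have c: "dIb t \<bullet> (dub t \<circ>\<^sub>H Vb t) = dub t \<bullet> (dIb t \<circ>\<^sub>H Vb t)" by (rule inner_hmul)
    show ?thesis unfolding a b using c by (simp add: inner_add_right inner_diff_right inner_minus_right)
  qed
  have T3: "dIl t \<bullet> (Ll *v ddIl t) = - (dVa t \<bullet> (Da *v dIl t)) - dVb t \<bullet> (Db *v dIl t) - dIl t \<bullet> (Rl *v dIl t)"
  proof -
    have a: "Ll *v ddIl t = - (transpose Da *v dVa t + transpose Db *v dVb t + Rl *v dIl t)"
      using e3 by (metis minus_minus)
    have c1: "dIl t \<bullet> (transpose Da *v dVa t) = dVa t \<bullet> (Da *v dIl t)"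
      by (metis inner_mv_transpose transpose_transpose inner_commute)
    have c2: "dIl t \<bullet> (transpose Db *v dVb t) = dVb t \<bullet> (Db *v dIl t)"
      by (metis inner_mv_transpose transpose_transpose inner_commute)
    show ?thesis unfolding a inner_minus_right inner_add_right c1 c2 by simp
  qed
  have T4: "dVa t \<bullet> (Ca *v ddVa t) = dVa t \<bullet> dIa t - dVa t \<bullet> (Ga *v dVa t) + dVa t \<bullet> (Da *v dIl t)"
    using e4 by (simp add: inner_add_right inner_diff_right)
  have T5: "dVb t \<bullet> (Cb *v ddVb t) = dVb t \<bullet> ((1 - ub t) \<circ>\<^sub>H dIb t) - dub t \<bullet> (dVb t \<circ>\<^sub>H Ib t)
      - dVb t \<bullet> (Gb *v dVb t) + dVb t \<bullet> (Db *v dIl t)"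
  proof -
    have b: "(0 - dub t) \<circ>\<^sub>H Ib t = - (dub t \<circ>\<^sub>H Ib t)" by (simp add: hmul_uminus_left)
    have c: "dVb t \<bullet> (dub t \<circ>\<^sub>H Ib t) = dub t \<bullet> (dVb t \<circ>\<^sub>H Ib t)" by (rule inner_hmul)
    show ?thesis unfolding e5 b using c by (simp add: inner_add_right inner_diff_right inner_minus_right)
  qed
  have X: "dIb t \<bullet> ((1 - ub t) \<circ>\<^sub>H dVb t) = dVb t \<bullet> ((1 - ub t) \<circ>\<^sub>H dIb t)"
    by (metis inner_hmul hmul_comm)
  have n1: "0 \<le> dIl t \<bullet> (Rl *v dIl t)" by (rule pd_nonneg[OF pd(6)])
  have n2: "0 \<le> dVa t \<bullet> (Ga *v dVa t)" by (rule pd_nonneg[OF pd(7)])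
  have n3: "0 \<le> dVb t \<bullet> (Gb *v dVb t)" by (rule pd_nonneg[OF pd(8)])
  have "S0 \<le> dua t \<bullet> (dIa t \<circ>\<^sub>H Vsa) + dub t \<bullet> (dIb t \<circ>\<^sub>H Vb t - dVb t \<circ>\<^sub>H Ib t)"
    unfolding S0' T1 T2 T3 T4 T5 X inner_diff_right using n1 n2 n3 inner_commute[of "dVa t" "dIa t"]
    by linarith
  with D show ?thesis by blast
qed

end
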